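(* For every $n\ge 1$, there are at least $((n-1)!)^n/(n!)$ pairwise non-isomorphic port-labeled cliques (complete graphs) of size $n$.
   Context: A port-labeled graph is a finite simple undirected graph without node labels in which, at each node of degree $d$, the incident edges carry distinct port numbers $0,\dots,d-1$. Two port-labeled graphs are isomorphic if there is a bijection of nodes mapping each edge $\{u,v\}$ with port $p$ at $u$ and $q$ at $v$ to an edge with port $p$ at the image of $u$ and $q$ at the image of $v$, and conversely. *)

theory Defs
  imports Complex_Main
begin

text \<open>A port-labeled (finite simple undirected) graph: vertex set, edge set of
2-element subsets, and a port function: plg_port G u v is the port number at u of the
edge {u,v} (only meaningful when {u,v} is an edge).\<close>

record 'a plgraph =
  plg_V :: "'a set"
  plg_E :: "'a set set"
  plg_port :: "'a \<Rightarrow> 'a \<Rightarrow> nat"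

definition plg_nbrs :: "'a plgraph \<Rightarrow> 'a \<Rightarrow> 'a set" where
  "plg_nbrs G u = {v \<in> plg_V G. {u, v} \<in> plg_E G}"

definition port_labeled_graph :: "'a plgraph \<Rightarrow> bool" where
  "port_labeled_graph G \<longleftrightarrow>
     finite (plg_V G) \<and>
     (\<forall>e \<in> plg_E G. \<exists>u v. e = {u, v} \<and> u \<noteq> v \<and> u \<in> plg_V G \<and> v \<in> plg_V G) \<and>
     (\<forall>u \<in> plg_V G. bij_betw (plg_port G u) (plg_nbrs G u) {0..<card (plg_nbrs G u)})"

definition plg_iso :: "'a plgraph \<Rightarrow> 'b plgraph \<Rightarrow> ('a \<Rightarrow> 'b) \<Rightarrow> bool" where
  "plg_iso G H f \<longleftrightarrow>
     bij_betw f (plg_V G) (plg_V H) \<and>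
     (\<forall>u \<in> plg_V G. \<forall>v \<in> plg_V G.
        ({u, v} \<in> plg_E G \<longleftrightarrow> {f u, f v} \<in> plg_E H) \<and>
        ({u, v} \<in> plg_E G \<longrightarrow> plg_port H (f u) (f v) = plg_port G u v))"

definition plg_isomorphic :: "'a plgraph \<Rightarrow> 'b plgraph \<Rightarrow> bool" where
  "plg_isomorphic G H \<longleftrightarrow> (\<exists>f. plg_iso G H f)"

definition port_labeled_clique :: "nat \<Rightarrow> 'a plgraph \<Rightarrow> bool" where
  "port_labeled_clique n G \<longleftrightarrow>
     port_labeled_graph G \<and> card (plg_V G) = n \<and>
     plg_E G = {{u, v} | u v. u \<in> plg_V G \<and> v \<in> plg_V G \<and> u \<noteq> v}"

end

theory Submission
  imports Defs "HOL-Combinatorics.Permutations" "HOL-Library.FuncSet"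
begin

definition cE :: "nat \<Rightarrow> nat set set" where
  "cE n = {{u, v} | u v. u \<in> {0..<n} \<and> v \<in> {0..<n} \<and> u \<noteq> v}"

definition mk :: "nat \<Rightarrow> (nat \<Rightarrow> nat \<Rightarrow> nat) \<Rightarrow> nat plgraph" where
  "mk n p = \<lparr>plg_V = {0..<n}, plg_E = cE n, plg_port = p\<rparr>"

definition nrm :: "nat \<Rightarrow> (nat \<Rightarrow> nat \<Rightarrow> nat) \<Rightarrow> bool" where
  "nrm n p \<longleftrightarrow> (\<forall>u v. \<not> (u < n \<and> v < n \<and> u \<noteq> v) \<longrightarrow> p u v = 0)"

definition trp :: "nat \<Rightarrow> (nat \<Rightarrow> nat \<Rightarrow> nat) \<Rightarrow> (nat \<Rightarrow> nat) \<Rightarrow> nat \<Rightarrow> nat \<Rightarrow> nat" where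
  "trp n q \<pi> = (\<lambda>u v. if u < n \<and> v < n \<and> u \<noteq> v then q (\<pi> u) (\<pi> v) else 0)"

definition Tr :: "nat \<Rightarrow> nat plgraph \<Rightarrow> nat plgraph set" where
  "Tr n H = (\<lambda>\<pi>. mk n (trp n (plg_port H) \<pi>)) ` {\<pi>. \<pi> permutes {0..<n}}"

lemma mk_inj: "mk n p = mk n q \<Longrightarrow> p = q"
  unfolding mk_def by simp

lemma edge_in: "u < n \<Longrightarrow> v < n \<Longrightarrow> u \<noteq> v \<Longrightarrow> {u, v} \<in> cE n"
  unfolding cE_def by auto

lemma Tr_card: "finite (Tr n H) \<and> card (Tr n H) \<le> fact n"
proof -
  have f: "finite {\<pi>. \<pi> permutes {0..<n::nat}}" by (rule finite_permutations) simp
  have c: "card {\<pi>. \<pi> permutes {0..<n::nat}} = fact n" by (rule card_permutations) simp_all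
  show ?thesis unfolding Tr_def using f c card_image_le[OF f] by auto
qed

lemma self_Tr: "nrm n p \<Longrightarrow> mk n p \<in> Tr n (mk n p)"
proof -
  assume "nrm n p"
  then have "trp n p id = p" unfolding trp_def nrm_def by (auto intro!: ext)
  then show ?thesis unfolding Tr_def by (auto intro!: image_eqI[where x=id] simp: mk_def)
qed

lemma iso_Tr:
  assumes "nrm n p" "nrm n q" "plg_iso (mk n p) (mk n q) f"
  shows "mk n p \<in> Tr n (mk n q)"
proof -
  have b: "bij_betw f {0..<n} {0..<n}" and pr: "\<And>u v. u < n \<Longrightarrow> v < n \<Longrightarrow> u \<noteq> v \<Longrightarrow> q (f u) (f v) = p u v"
    using assms(3) edge_in unfolding plg_iso_def mk_def by auto
  define \<pi> where "\<pi> = (\<lambda>x. if x < n then f x else x)"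
  have "bij_betw \<pi> {0..<n} {0..<n}" using b by (rule bij_betw_cong[THEN iffD1, rotated]) (auto simp: \<pi>_def)
  then have pm: "\<pi> permutes {0..<n}" by (rule bij_imp_permutes) (auto simp: \<pi>_def)
  have "p = trp n q \<pi>"
    using pr assms(1) unfolding trp_def nrm_def \<pi>_def by (auto intro!: ext)
  then show ?thesis using pm unfolding Tr_def by (auto simp: mk_def)
qed

lemma iso_Tr2:
  assumes "nrm n p" "nrm n q" "plg_iso (mk n p) (mk n q) f"
  shows "mk n q \<in> Tr n (mk n p)"
proof -
  have b: "bij_betw f {0..<n} {0..<n}" and pr: "\<And>u v. u < n \<Longrightarrow> v < n \<Longrightarrow> u \<noteq> v \<Longrightarrow> q (f u) (f v) = p u v"
    using assms(3) edge_in unfolding plg_iso_def mk_def by auto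
  define g where "g = inv_into {0..<n} f"
  have bg: "bij_betw g {0..<n} {0..<n}" using b bij_betw_inv_into unfolding g_def by blast
  have fg: "\<And>x. x < n \<Longrightarrow> f (g x) = x" using b unfolding g_def
    by (meson atLeastLessThan_iff bij_betw_inv_into_right zero_le)
  define \<pi> where "\<pi> = (\<lambda>x. if x < n then g x else x)"
  have "bij_betw \<pi> {0..<n} {0..<n}" using bg by (rule bij_betw_cong[THEN iffD1, rotated]) (auto simp: \<pi>_def)
  then have pm: "\<pi> permutes {0..<n}" by (rule bij_imp_permutes) (auto simp: \<pi>_def)
  have q: "q x y = p (g x) (g y)" if "x < n" "y < n" "x \<noteq> y" for x y
  proof -
    have "g x < n" "g y < n" using bg that by (auto dest: bij_betw_apply)
    moreover have "g x \<noteq> g y" using fg that by metis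
    ultimately show ?thesis using pr[of "g x" "g y"] fg that by simp
  qed
  have "q = trp n p \<pi>"
    using q assms(2) unfolding trp_def nrm_def \<pi>_def by (auto intro!: ext)
  then show ?thesis using pm unfolding Tr_def by (auto simp: mk_def)
qed

lemma cover:
  assumes "finite A" "\<forall>G\<in>A. \<exists>p. G = mk n p \<and> nrm n p"
  shows "\<exists>S\<subseteq>A. (\<forall>G\<in>S. \<forall>H\<in>S. G \<noteq> H \<longrightarrow> \<not> plg_isomorphic G H) \<and> A \<subseteq> (\<Union>H\<in>S. Tr n H)"
  using assms
proof (induction A rule: finite_induct)
  case empty then show ?case by auto
next
  case (insert x A)
  then have "\<forall>G\<in>A. \<exists>p. G = mk n p \<and> nrm n p" by simp
  with insert.IH obtain S where S: "S \<subseteq> A" "\<forall>G\<in>S. \<forall>H\<in>S. G \<noteq> H \<longrightarrow> \<not> plg_isomorphic G H"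
    "A \<subseteq> (\<Union>H\<in>S. Tr n H)" by blast
  show ?case
  proof (cases "x \<in> (\<Union>H\<in>S. Tr n H)")
    case True
    then have "insert x A \<subseteq> (\<Union>H\<in>S. Tr n H)" using S(3) by simp
    moreover have "S \<subseteq> insert x A" using S(1) by blast
    ultimately show ?thesis using S(2) by blast
  next
    case False
    obtain p where p: "x = mk n p" "nrm n p" using insert.prems by auto
    have ni: "\<not> plg_isomorphic x H \<and> \<not> plg_isomorphic H x" if HS: "H \<in> S" for H
    proof -
      obtain q where q: "H = mk n q" "nrm n q" using insert.prems HS S(1) by auto
      have "x \<notin> Tr n H" using False HS by blast
      then have "\<not> plg_isomorphic x H" using iso_Tr[OF p(2) q(2)] p q
        unfolding plg_isomorphic_def by blast
      moreover have "\<not> plg_isomorphic H x" using iso_Tr2[OF q(2) p(2)] p q \<open>x \<notin> Tr n H\<close>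
        unfolding plg_isomorphic_def by blast
      ultimately show ?thesis by blast
    qed
    have xs: "x \<in> Tr n x" using self_Tr p by simp
    have "insert x S \<subseteq> insert x A" using S(1) by blast
    moreover have "insert x A \<subseteq> (\<Union>H\<in>insert x S. Tr n H)" using S(3) xs by blast
    moreover have "\<forall>G\<in>insert x S. \<forall>H\<in>insert x S. G \<noteq> H \<longrightarrow> \<not> plg_isomorphic G H"
      using S(2) ni by blast
    ultimately show ?thesis by blast
  qed
qed

definition idx :: "nat \<Rightarrow> nat \<Rightarrow> nat" where
  "idx u v = (if v < u then v else v - 1)"

lemma idx_bij: "u < n \<Longrightarrow> bij_betw (idx u) ({0..<n}-{u}) {0..<n-1}"
  by (rule bij_betw_byWitness[where f'="\<lambda>k. if k < u then k else k + 1"])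
     (auto simp: idx_def)

definition Phi :: "nat \<Rightarrow> (nat \<Rightarrow> nat \<Rightarrow> nat) \<Rightarrow> nat \<Rightarrow> nat \<Rightarrow> nat" where
  "Phi n \<sigma> = (\<lambda>u v. if u < n \<and> v < n \<and> u \<noteq> v then \<sigma> u (idx u v) else 0)"

definition Sig :: "nat \<Rightarrow> (nat \<Rightarrow> nat \<Rightarrow> nat) set" where
  "Sig n = PiE {0..<n} (\<lambda>_. {s. s permutes {0..<n-1}})"

lemma Sig_card: "finite (Sig n) \<and> card (Sig n) = fact (n - 1) ^ n"
proof -
  have f: "finite {s. s permutes {0..<n-1::nat}}" by (rule finite_permutations) simp
  have c: "card {s. s permutes {0..<n-1::nat}} = fact (n - 1)" by (rule card_permutations) simp_all
  show ?thesis unfolding Sig_def using f c by (simp add: finite_PiE card_PiE)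
qed

lemma nbrs_mk: "u < n \<Longrightarrow> plg_nbrs (mk n p) u = {0..<n} - {u}"
  unfolding plg_nbrs_def mk_def cE_def apply (auto simp: doubleton_eq_iff) by blast

lemma good:
  assumes "\<sigma> \<in> Sig n"
  shows "nrm n (Phi n \<sigma>) \<and> port_labeled_clique n (mk n (Phi n \<sigma>))"
proof -
  have nr: "nrm n (Phi n \<sigma>)" unfolding nrm_def Phi_def by auto
  have bj: "bij_betw (Phi n \<sigma> u) ({0..<n}-{u}) {0..<n-1}" if u: "u < n" for u
  proof -
    have "\<sigma> u permutes {0..<n-1}" using assms u unfolding Sig_def by auto
    then have "bij_betw (\<sigma> u \<circ> idx u) ({0..<n}-{u}) {0..<n-1}"
      using bij_betw_trans[OF idx_bij[OF u] permutes_imp_bij] by blast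
    then show ?thesis by (rule bij_betw_cong[THEN iffD1, rotated]) (auto simp: Phi_def u)
  qed
  have card: "u < n \<Longrightarrow> card ({0..<n::nat} - {u}) = n - 1" for u by simp
  have "port_labeled_graph (mk n (Phi n \<sigma>))"
    unfolding port_labeled_graph_def
  proof (intro conjI ballI)
    show "finite (plg_V (mk n (Phi n \<sigma>)))" by (simp add: mk_def)
  next
    fix e assume "e \<in> plg_E (mk n (Phi n \<sigma>))"
    then show "\<exists>u v. e = {u, v} \<and> u \<noteq> v \<and> u \<in> plg_V (mk n (Phi n \<sigma>)) \<and> v \<in> plg_V (mk n (Phi n \<sigma>))"
      by (auto simp: mk_def cE_def)
  next
    fix u assume "u \<in> plg_V (mk n (Phi n \<sigma>))"
    then have u: "u < n" by (simp add: mk_def)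
    show "bij_betw (plg_port (mk n (Phi n \<sigma>)) u) (plg_nbrs (mk n (Phi n \<sigma>)) u)
        {0..<card (plg_nbrs (mk n (Phi n \<sigma>)) u)}"
      using bj[OF u] card[OF u] nbrs_mk[OF u] by (simp add: mk_def)
  qed
  moreover have "card (plg_V (mk n (Phi n \<sigma>))) = n" by (simp add: mk_def)
  moreover have "plg_E (mk n (Phi n \<sigma>)) = {{u, v} | u v. u \<in> plg_V (mk n (Phi n \<sigma>)) \<and> v \<in> plg_V (mk n (Phi n \<sigma>)) \<and> u \<noteq> v}"
    by (simp add: mk_def cE_def)
  ultimately show ?thesis using nr unfolding port_labeled_clique_def by blast
qed

lemma Phi_inj: "inj_on (\<lambda>\<sigma>. mk n (Phi n \<sigma>)) (Sig n)"
proof (rule inj_onI)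
  fix \<sigma> \<tau> assume s: "\<sigma> \<in> Sig n" and t: "\<tau> \<in> Sig n" and eq: "mk n (Phi n \<sigma>) = mk n (Phi n \<tau>)"
  have eq2: "Phi n \<sigma> = Phi n \<tau>" using mk_inj[OF eq] .
  show "\<sigma> = \<tau>"
    using s t unfolding Sig_def
  proof (rule PiE_ext)
    fix u assume "u \<in> {0..<n}"
    then have u: "u < n" by simp
    have ps: "\<sigma> u permutes {0..<n-1}" "\<tau> u permutes {0..<n-1}" using s t u unfolding Sig_def by auto
    show "\<sigma> u = \<tau> u"
    proof
      fix k
      show "\<sigma> u k = \<tau> u k"
      proof (cases "k < n - 1")
        case True
        define v where "v = (if k < u then k else k + 1)"
        have v: "v < n" "v \<noteq> u" "idx u v = k" using True u unfolding v_def idx_def by auto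
        have "Phi n \<sigma> u v = Phi n \<tau> u v" using eq2 by simp
        then show ?thesis using v u unfolding Phi_def by simp
      next
        case False
        then have "k \<notin> {0..<n-1}" by simp
        then show ?thesis using ps by (simp add: permutes_not_in)
      qed
    qed
  qed
qed

theorem lemma5p2:
  fixes n :: nat
  assumes "n \<ge> 1"
  shows "\<exists>S :: nat plgraph set.
           finite S \<and>
           (\<forall>G \<in> S. port_labeled_clique n G) \<and>
           (\<forall>G \<in> S. \<forall>H \<in> S. G \<noteq> H \<longrightarrow> \<not> plg_isomorphic G H) \<and>
           real (card S) \<ge> (fact (n - 1) :: real) ^ n / (fact n :: real)"
proof -
  define T where "T = (\<lambda>\<sigma>. mk n (Phi n \<sigma>)) ` Sig n"
  have fT: "finite T" using Sig_card unfolding T_def by simp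
  have cT: "card T = fact (n - 1) ^ n" using Sig_card Phi_inj unfolding T_def by (simp add: card_image)
  have gT: "\<forall>G\<in>T. \<exists>p. G = mk n p \<and> nrm n p" using good unfolding T_def by blast
  have cT2: "\<forall>G\<in>T. port_labeled_clique n G" using good unfolding T_def by blast
  obtain S where S: "S \<subseteq> T" "\<forall>G\<in>S. \<forall>H\<in>S. G \<noteq> H \<longrightarrow> \<not> plg_isomorphic G H"
      "T \<subseteq> (\<Union>H\<in>S. Tr n H)"
    using cover[OF fT gT] by blast
  have fS: "finite S" using S(1) fT finite_subset by blast
  have "card T \<le> card (\<Union>H\<in>S. Tr n H)"
    using S(3) Tr_card fS by (intro card_mono) auto
  also have "\<dots> \<le> (\<Sum>H\<in>S. card (Tr n H))" using fS by (rule card_UN_le)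
  also have "\<dots> \<le> (\<Sum>H\<in>S. fact n)" using Tr_card by (intro sum_mono) blast
  also have "\<dots> = card S * fact n" by simp
  finally have le: "fact (n - 1) ^ n \<le> card S * (fact n :: nat)" using cT by simp
  then have "real (fact (n - 1) ^ n) \<le> real (card S * fact n)" by (simp only: of_nat_le_iff)
  then have "(fact (n - 1) :: real) ^ n \<le> real (card S) * fact n" by (simp add: of_nat_fact)
  then have ineq: "(fact (n - 1) :: real) ^ n / fact n \<le> real (card S)"
    by (simp add: divide_le_eq)
  have cl: "\<forall>G\<in>S. port_labeled_clique n G" using S(1) cT2 by blast
  show ?thesis
    apply (rule exI[of _ S])
    using fS cl S(2) ineq by blast
qed

end
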